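(* Let $(G,\sigma)$ be a finite connected signed graph satisfying $CD^{\sigma}(K,N)$ for some $K\in\mathbb{R}$ and $N\in(0,\infty]$. Let $f:V\to\mathbb{R}$ be an eigenfunction of the signed Laplacian $\Delta^{\sigma}$ to a nonzero eigenvalue $\lambda^{\sigma}$, i.e. $-\Delta^\sigma f=\lambda^\sigma f$. Then for all $x\in V$ and all $\alpha>2-2K/\lambda^{\sigma}$, \[ |\nabla^{\sigma}f|^{2}(x)+\alpha\lambda^{\sigma} f^{2}(x)\leq\frac{(\alpha^{2}-\frac{4}{N})\lambda^{\sigma}+2K\alpha}{(\alpha-2)\lambda^{\sigma}+2K}\,\lambda^{\sigma}\cdot \max_{z\in V}f^{2}(z), \] with the convention $\frac1N=0$ if $N=\infty$.
   Context: $G=(V,E)$ is a finite simple connected graph; $x\sim y$ means $\{x,y\}\in E$; $d_x$ is the degree of $x$. A sign is a map $\sigma:E\to\{-1,+1\}$, $\sigma_{xy}:=\sigma(\{x,y\})$; $(G,\sigma)$ is a signed graph. The signed Laplacian is $\Delta^{\sigma}f(x)=\frac{1}{d_x}\sum_{y\sim x}(\sigma_{xy}f(y)-f(x))$, and $\Delta$ denotes the same operator with $\sigma\equiv+1$. For $f,g:V\to\mathbb{R}$: $\Gamma^{\sigma}(f,g)=\frac12\{\Delta(fg)-g\Delta^{\sigma}f-f\Delta^{\sigma}g\}$, $\Gamma_2^{\sigma}(f,g)=\frac12\{\Delta\Gamma^{\sigma}(f,g)-\Gamma^{\sigma}(g,\Delta^{\sigma}f)-\Gamma^{\sigma}(f,\Delta^{\sigma}g)\}$,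 $\Gamma^\sigma(f)=\Gamma^\sigma(f,f)$, $\Gamma_2^\sigma(f)=\Gamma_2^\sigma(f,f)$, and $|\nabla^{\sigma}f|^2(x):=2\Gamma^\sigma(f)(x)=\frac{1}{d_x}\sum_{y\sim x}(\sigma_{xy}f(y)-f(x))^2$. $(G,\sigma)$ satisfies $CD^{\sigma}(K,N)$ ($K\in\mathbb{R}$, $N\in(0,\infty]$) if $\Gamma_2^{\sigma}(f)(x)\ge\frac1N(\Delta^\sigma f)^2(x)+K\Gamma^\sigma(f)(x)$ for all $f:V\to\mathbb{R}$ and all $x\in V$ (with $\frac1N=0$ for $N=\infty$). *)

theory Defs
  imports "HOL-Analysis.Analysis" "HOL-Library.Extended_Real"
begin

definition signed_graph :: "'a set \<Rightarrow> ('a \<Rightarrow> 'a \<Rightarrow> bool) \<Rightarrow> ('a \<Rightarrow> 'a \<Rightarrow> real) \<Rightarrow> bool" where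
  "signed_graph V E sig \<longleftrightarrow>
     finite V \<and> V \<noteq> {} \<and>
     (\<forall>x y. E x y \<longrightarrow> x \<in> V \<and> y \<in> V) \<and>
     (\<forall>x y. E x y \<longrightarrow> E y x) \<and>
     (\<forall>x. \<not> E x x) \<and>
     (\<forall>x\<in>V. \<forall>y\<in>V. (x, y) \<in> ({(u, v). E u v})\<^sup>*) \<and>
     (\<forall>x y. E x y \<longrightarrow> sig x y = sig y x \<and> (sig x y = 1 \<or> sig x y = -1))"

definition nbrs :: "'a set \<Rightarrow> ('a \<Rightarrow> 'a \<Rightarrow> bool) \<Rightarrow> 'a \<Rightarrow> 'a set" where
  "nbrs V E x = {y \<in> V. E x y}"

definition deg :: "'a set \<Rightarrow> ('a \<Rightarrow> 'a \<Rightarrow> bool) \<Rightarrow> 'a \<Rightarrow> real" where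
  "deg V E x = real (card (nbrs V E x))"

definition slap :: "'a set \<Rightarrow> ('a \<Rightarrow> 'a \<Rightarrow> bool) \<Rightarrow> ('a \<Rightarrow> 'a \<Rightarrow> real) \<Rightarrow> ('a \<Rightarrow> real) \<Rightarrow> 'a \<Rightarrow> real" where
  "slap V E sig f x = (1 / deg V E x) * (\<Sum>y\<in>nbrs V E x. sig x y * f y - f x)"

definition lap :: "'a set \<Rightarrow> ('a \<Rightarrow> 'a \<Rightarrow> bool) \<Rightarrow> ('a \<Rightarrow> real) \<Rightarrow> 'a \<Rightarrow> real" where
  "lap V E f x = slap V E (\<lambda>_ _. 1) f x"

definition sGamma :: "'a set \<Rightarrow> ('a \<Rightarrow> 'a \<Rightarrow> bool) \<Rightarrow> ('a \<Rightarrow> 'a \<Rightarrow> real) \<Rightarrow> ('a \<Rightarrow> real) \<Rightarrow> ('a \<Rightarrow> real) \<Rightarrow> 'a \<Rightarrow> real" where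
  "sGamma V E sig f g x =
     (1/2) * (lap V E (\<lambda>z. f z * g z) x - g x * slap V E sig f x - f x * slap V E sig g x)"

definition sGamma2 :: "'a set \<Rightarrow> ('a \<Rightarrow> 'a \<Rightarrow> bool) \<Rightarrow> ('a \<Rightarrow> 'a \<Rightarrow> real) \<Rightarrow> ('a \<Rightarrow> real) \<Rightarrow> ('a \<Rightarrow> real) \<Rightarrow> 'a \<Rightarrow> real" where
  "sGamma2 V E sig f g x =
     (1/2) * (lap V E (sGamma V E sig f g) x
              - sGamma V E sig g (slap V E sig f) x
              - sGamma V E sig f (slap V E sig g) x)"

definition sgrad2 :: "'a set \<Rightarrow> ('a \<Rightarrow> 'a \<Rightarrow> bool) \<Rightarrow> ('a \<Rightarrow> 'a \<Rightarrow> real) \<Rightarrow> ('a \<Rightarrow> real) \<Rightarrow> 'a \<Rightarrow> real" where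
  "sgrad2 V E sig f x = (1 / deg V E x) * (\<Sum>y\<in>nbrs V E x. (sig x y * f y - f x)\<^sup>2)"

definition invN :: "ereal \<Rightarrow> real" where
  "invN N = (if N = \<infinity> then 0 else 1 / real_of_ereal N)"

definition CD_sig :: "'a set \<Rightarrow> ('a \<Rightarrow> 'a \<Rightarrow> bool) \<Rightarrow> ('a \<Rightarrow> 'a \<Rightarrow> real) \<Rightarrow> real \<Rightarrow> ereal \<Rightarrow> bool" where
  "CD_sig V E sig K N \<longleftrightarrow>
     (\<forall>f :: 'a \<Rightarrow> real. \<forall>x\<in>V.
        sGamma2 V E sig f f x \<ge> invN N * (slap V E sig f x)\<^sup>2 + K * sGamma V E sig f f x)"

end

theory Submission
  imports Defs
begin

lemma nbrs_sub: "signed_graph V E sig \<Longrightarrow> nbrs V E x \<subseteq> V"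
  by (auto simp: nbrs_def)

lemma nbrs_fin: "signed_graph V E sig \<Longrightarrow> finite (nbrs V E x)"
  unfolding signed_graph_def nbrs_def by auto

lemma slap_cong:
  assumes "x \<in> V" "\<forall>z\<in>V. g z = h z"
  shows "slap V E sig g x = slap V E sig h x"
  unfolding slap_def using assms by (auto intro!: sum.cong simp: nbrs_def)

lemma lap_cong:
  assumes "x \<in> V" "\<forall>z\<in>V. g z = h z"
  shows "lap V E g x = lap V E h x"
  unfolding lap_def using slap_cong[OF assms] by simp

lemma sGamma_cong:
  assumes "x \<in> V" "\<forall>z\<in>V. g z = h z"
  shows "sGamma V E sig f g x = sGamma V E sig f h x"
proof -
  have "lap V E (\<lambda>z. f z * g z) x = lap V E (\<lambda>z. f z * h z) x"
    by (rule lap_cong) (use assms in auto)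
  then show ?thesis unfolding sGamma_def
    using slap_cong[OF assms, of E sig] assms by simp
qed

lemma slap_scale: "slap V E sig (\<lambda>z. c * g z) x = c * slap V E sig g x"
  unfolding slap_def by (simp add: sum_distrib_left algebra_simps)

lemma lap_expand: "lap V E g x = (1 / deg V E x) * (\<Sum>y\<in>nbrs V E x. g y - g x)"
  unfolding lap_def slap_def by simp

lemma lap_lin: "lap V E (\<lambda>z. a * g z + b * h z) x = a * lap V E g x + b * lap V E h x"
proof -
  have "(\<Sum>y\<in>nbrs V E x. (a * g y + b * h y) - (a * g x + b * h x))
     = (\<Sum>y\<in>nbrs V E x. a * (g y - g x) + b * (h y - h x))"
    by (rule sum.cong) (auto simp: algebra_simps)
  also have "\<dots> = a * (\<Sum>y\<in>nbrs V E x. g y - g x) + b * (\<Sum>y\<in>nbrs V E x. h y - h x)"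
    by (simp only: sum.distrib sum_distrib_left)
  finally show ?thesis unfolding lap_expand by (simp add: algebra_simps)
qed

lemma sGamma_scale: "sGamma V E sig f (\<lambda>z. c * f z) x = c * sGamma V E sig f f x"
proof -
  have "(\<lambda>z. f z * (c * f z)) = (\<lambda>z. c * (f z * f z))" by auto
  then have "lap V E (\<lambda>z. f z * (c * f z)) x = c * lap V E (\<lambda>z. f z * f z) x"
    unfolding lap_def using slap_scale by metis
  then show ?thesis unfolding sGamma_def slap_scale by (simp add: algebra_simps)
qed

lemma sgrad2_eq:
  assumes sg: "signed_graph V E sig"
  shows "sgrad2 V E sig f x = 2 * sGamma V E sig f f x"
proof -
  have t: "(sig x y * f y - f x)\<^sup>2 = (f y * f y - f x * f x) - f x * (sig x y * f y - f x) - f x * (sig x y * f y - f x)"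
    if "y \<in> nbrs V E x" for y
  proof -
    have "sig x y = 1 \<or> sig x y = -1" using sg that unfolding signed_graph_def nbrs_def by auto
    then show ?thesis by (auto simp: power2_eq_square algebra_simps)
  qed
  define SA where "SA = (\<Sum>y\<in>nbrs V E x. f y * f y - f x * f x)"
  define SB where "SB = (\<Sum>y\<in>nbrs V E x. sig x y * f y - f x)"
  have gen: "\<And>A B (c::real) (S::'a set). (\<Sum>y\<in>S. A y - c * B y - c * B y) = sum A S - c * sum B S - c * sum B S"
    by (simp add: sum_subtractf sum_distrib_left sum_negf)
  have "sgrad2 V E sig f x = (1 / deg V E x) * (\<Sum>y\<in>nbrs V E x. (f y * f y - f x * f x) - f x * (sig x y * f y - f x) - f x * (sig x y * f y - f x))"
    unfolding sgrad2_def using t by (simp cong: sum.cong)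
  also have "\<dots> = (1 / deg V E x) * (SA - f x * SB - f x * SB)"
    unfolding SA_def SB_def by (subst gen) (rule refl)
  finally have e1: "sgrad2 V E sig f x = (1 / deg V E x) * (SA - f x * SB - f x * SB)" .
  have e2: "sGamma V E sig f f x = (1/2) * ((1 / deg V E x) * SA - f x * ((1 / deg V E x) * SB) - f x * ((1 / deg V E x) * SB))"
    unfolding sGamma_def lap_expand SA_def SB_def by (simp add: slap_def)
  show ?thesis unfolding e1 e2 by (simp add: algebra_simps)
qed

lemma deg_lap:
  assumes sg: "signed_graph V E sig"
  shows "deg V E x * lap V E g x = (\<Sum>y\<in>nbrs V E x. g y - g x)"
proof (cases "deg V E x = 0")
  case True
  then have "nbrs V E x = {}" using nbrs_fin[OF sg] unfolding deg_def by auto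
  then show ?thesis by (simp add: lap_def slap_def)
next
  case False
  then show ?thesis unfolding lap_def slap_def by simp
qed

lemma sum_deg_lap:
  assumes sg: "signed_graph V E sig"
  shows "(\<Sum>x\<in>V. deg V E x * lap V E g x) = 0"
proof -
  have fin: "finite V" using sg unfolding signed_graph_def by auto
  have sym: "\<And>x y. E x y = E y x" using sg unfolding signed_graph_def by blast
  have "(\<Sum>x\<in>V. deg V E x * lap V E g x) = (\<Sum>x\<in>V. \<Sum>y\<in>nbrs V E x. g y - g x)"
    using deg_lap[OF sg] by simp
  also have "\<dots> = (\<Sum>x\<in>V. \<Sum>y\<in>V. if E x y then g y - g x else 0)"
    unfolding nbrs_def by (simp add: sum.inter_filter[OF fin])
  also have "\<dots> = (\<Sum>x\<in>V. \<Sum>y\<in>V. if E x y then g y else 0) - (\<Sum>x\<in>V. \<Sum>y\<in>V. if E x y then g x else 0)"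
    by (simp add: sum_subtractf[symmetric] if_distrib cong: if_cong)
  also have "(\<Sum>x\<in>V. \<Sum>y\<in>V. if E x y then g y else 0) = (\<Sum>y\<in>V. \<Sum>x\<in>V. if E x y then g y else 0)"
    by (rule sum.swap)
  also have "\<dots> = (\<Sum>y\<in>V. \<Sum>x\<in>V. if E y x then g y else 0)"
    using sym by simp
  finally show ?thesis by simp
qed

theorem theorem3p1:
  fixes V :: "'a set" and E :: "'a \<Rightarrow> 'a \<Rightarrow> bool" and sig :: "'a \<Rightarrow> 'a \<Rightarrow> real"
    and K :: real and N :: ereal and f :: "'a \<Rightarrow> real" and lam :: real
    and x :: 'a and \<alpha> :: real
  assumes "signed_graph V E sig"
    and "N > 0"
    and "CD_sig V E sig K N"
    and "\<exists>z\<in>V. f z \<noteq> 0"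
    and "\<forall>z\<in>V. - slap V E sig f z = lam * f z"
    and "lam \<noteq> 0"
    and "x \<in> V"
    and "\<alpha> > 2 - 2 * K / lam"
  shows "sgrad2 V E sig f x + \<alpha> * lam * (f x)\<^sup>2
     \<le> ((\<alpha>\<^sup>2 - 4 * invN N) * lam + 2 * K * \<alpha>) / ((\<alpha> - 2) * lam + 2 * K) * lam
        * Max ((\<lambda>z. (f z)\<^sup>2) ` V)"
proof -
  note sg = assms(1)
  have finV: "finite V" and neV: "V \<noteq> {}" using sg unfolding signed_graph_def by auto
  define n where "n = invN N"
  have n0: "n \<ge> 0"
  proof (cases "N = \<infinity>")
    case True then show ?thesis by (simp add: n_def invN_def)
  next
    case False
    then have "real_of_ereal N > 0" using assms(2)
      by (cases N) auto
    then show ?thesis using False by (simp add: n_def invN_def)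
  qed
  define G where "G = sGamma V E sig f f"
  define G2 where "G2 = (\<lambda>z. sGamma2 V E sig f f z)"
  define d where "d = deg V E"
  have d0: "d z \<ge> 0" for z by (simp add: d_def deg_def)
  have ev: "slap V E sig f z = - lam * f z" if "z \<in> V" for z using assms(5) that by auto
  have P1: "sGamma V E sig f (slap V E sig f) z = - lam * G z" if "z \<in> V" for z
  proof -
    have "sGamma V E sig f (slap V E sig f) z = sGamma V E sig f (\<lambda>w. - lam * f w) z"
      by (rule sGamma_cong) (use that ev in auto)
    then show ?thesis using sGamma_scale[of V E sig f "- lam" z] G_def by simp
  qed
  have P2: "G2 z = 1/2 * lap V E G z + lam * G z" if "z \<in> V" for z
    unfolding G2_def sGamma2_def using P1[OF that] by (simp add: G_def algebra_simps)
  have P3: "lap V E (\<lambda>w. f w * f w) z = 2 * G z - 2 * lam * (f z)\<^sup>2" if "z \<in> V" for z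
    unfolding G_def sGamma_def using ev[OF that] by (simp add: power2_eq_square algebra_simps)
  have G0: "G z \<ge> 0" for z
  proof -
    have "sgrad2 V E sig f z \<ge> 0" unfolding sgrad2_def deg_def
      by (intro mult_nonneg_nonneg sum_nonneg) auto
    then show ?thesis using sgrad2_eq[OF sg] G_def by simp
  qed
  have CDz: "G2 z \<ge> n * lam\<^sup>2 * (f z)\<^sup>2 + K * G z" if "z \<in> V" for z
  proof -
    have "G2 z \<ge> n * (slap V E sig f z)\<^sup>2 + K * G z"
      using assms(3) that unfolding CD_sig_def G2_def G_def n_def by blast
    then show ?thesis using ev[OF that] by (simp add: power_mult_distrib)
  qed
  have dpos: "d z > 0" if "z \<in> V" "f z \<noteq> 0" for z
  proof (rule ccontr)
    assume "\<not> d z > 0"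
    then have "d z = 0" using d0[of z] by simp
    then have "slap V E sig f z = 0" by (simp add: slap_def d_def)
    then show False using ev[OF that(1)] that(2) assms(6) by simp
  qed
  define S where "S = (\<Sum>z\<in>V. d z * (f z)\<^sup>2)"
  have Spos: "S > 0"
  proof -
    obtain z where z: "z \<in> V" "f z \<noteq> 0" using assms(4) by auto
    show ?thesis unfolding S_def
      by (rule sum_pos2[OF finV z(1)]) (use dpos[OF z] z d0 in auto)
  qed
  have sum1: "(\<Sum>z\<in>V. d z * G z) = lam * S"
  proof -
    have "0 = (\<Sum>z\<in>V. d z * lap V E (\<lambda>w. f w * f w) z)"
      using sum_deg_lap[OF sg] d_def by simp
    also have "\<dots> = (\<Sum>z\<in>V. 2 * (d z * G z) - 2 * lam * (d z * (f z)\<^sup>2))"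
      by (rule sum.cong) (auto simp: P3 algebra_simps)
    also have "\<dots> = 2 * (\<Sum>z\<in>V. d z * G z) - 2 * lam * S"
      by (simp add: S_def sum_subtractf sum_distrib_left)
    finally show ?thesis by simp
  qed
  have lampos: "lam > 0"
  proof -
    have "lam * S \<ge> 0" unfolding sum1[symmetric]
      by (rule sum_nonneg) (use d0 G0 in auto)
    then have "lam \<ge> 0" using Spos by (simp add: zero_le_mult_iff)
    then show ?thesis using assms(6) by simp
  qed
  have sum2: "(\<Sum>z\<in>V. d z * G2 z) = lam * lam * S"
  proof -
    have "(\<Sum>z\<in>V. d z * G2 z) = (\<Sum>z\<in>V. 1/2 * (d z * lap V E G z) + lam * (d z * G z))"
      by (rule sum.cong) (auto simp: P2 algebra_simps)
    also have "\<dots> = 1/2 * (\<Sum>z\<in>V. d z * lap V E G z) + lam * (\<Sum>z\<in>V. d z * G z)"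
      by (simp add: sum.distrib sum_distrib_left)
    also have "\<dots> = lam * lam * S" using sum_deg_lap[OF sg] d_def sum1 by simp
    finally show ?thesis .
  qed
  have sum3: "(\<Sum>z\<in>V. d z * G2 z) \<ge> n * lam\<^sup>2 * S + K * (lam * S)"
  proof -
    have "(\<Sum>z\<in>V. d z * G2 z) \<ge> (\<Sum>z\<in>V. d z * (n * lam\<^sup>2 * (f z)\<^sup>2 + K * G z))"
      by (rule sum_mono) (use CDz d0 in \<open>auto intro: mult_left_mono\<close>)
    also have "(\<Sum>z\<in>V. d z * (n * lam\<^sup>2 * (f z)\<^sup>2 + K * G z)) = n * lam\<^sup>2 * S + K * (\<Sum>z\<in>V. d z * G z)"
      unfolding S_def by (simp add: sum.distrib sum_distrib_left algebra_simps)
    finally show ?thesis using sum1 by simp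
  qed
  have lich: "K \<le> lam * (1 - n)"
  proof -
    have "lam * S * lam \<ge> lam * S * (n * lam + K)"
      using sum2 sum3 by (simp add: power2_eq_square algebra_simps)
    then have "lam \<ge> n * lam + K" using Spos lampos by (simp add: mult_le_cancel_left_pos)
    then show ?thesis by (simp add: algebra_simps)
  qed
  define c where "c = (\<alpha> - 2) * lam + 2 * K"
  have cpos: "c > 0"
  proof -
    have "(\<alpha> - 2 + 2 * K / lam) * lam > 0" using assms(8) lampos by simp
    then show ?thesis unfolding c_def using lampos by (simp add: algebra_simps)
  qed
  define A where "A = (\<alpha>\<^sup>2 - 4 * n) * lam + 2 * K * \<alpha>"
  have A0: "A \<ge> 0"
  proof -
    define t where "t = K / lam"
    have Kt: "K = t * lam" using lampos by (simp add: t_def)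
    have t1: "t \<le> 1 - n" using lich lampos by (simp add: Kt mult.commute)
    define s where "s = \<alpha> - 2 + 2 * t"
    have s0: "s > 0" using assms(8) by (simp add: s_def t_def)
    have "\<alpha>\<^sup>2 - 4 * n + 2 * t * \<alpha> = 4 * (1 - t - n) + s * (4 - 2 * t) + s\<^sup>2"
      by (simp add: s_def power2_eq_square algebra_simps)
    also have "\<dots> \<ge> 0" using s0 t1 n0 by (intro add_nonneg_nonneg mult_nonneg_nonneg) auto
    finally have "\<alpha>\<^sup>2 - 4 * n + 2 * t * \<alpha> \<ge> 0" .
    moreover have "A = lam * (\<alpha>\<^sup>2 - 4 * n + 2 * t * \<alpha>)" by (simp add: A_def Kt algebra_simps)
    ultimately show ?thesis using lampos by simp
  qed
  define F where "F = (\<lambda>z. 2 * G z + (\<alpha> * lam) * (f z * f z))"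
  have Fs: "sgrad2 V E sig f z + \<alpha> * lam * (f z)\<^sup>2 = F z" for z
    using sgrad2_eq[OF sg] by (simp add: F_def G_def power2_eq_square)
  obtain x0 where x0: "x0 \<in> V" "\<forall>y\<in>V. F y \<le> F x0"
  proof -
    have "Max (F ` V) \<in> F ` V" using finV neV by simp
    then obtain x0 where "x0 \<in> V" "F x0 = Max (F ` V)" by auto
    moreover have "\<forall>y\<in>V. F y \<le> Max (F ` V)" using finV by simp
    ultimately show ?thesis using that by metis
  qed
  have lapF: "lap V E F x0 \<le> 0"
  proof -
    have "(\<Sum>y\<in>nbrs V E x0. F y - F x0) \<le> 0"
      by (rule sum_nonpos) (use x0 nbrs_sub[OF sg] in auto)
    moreover have "1 / deg V E x0 \<ge> 0" by (simp add: deg_def)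
    ultimately show ?thesis unfolding lap_expand by (simp add: divide_nonpos_nonneg)
  qed
  have lapF2: "lap V E F x0 = 2 * lap V E G x0 + (\<alpha> * lam) * lap V E (\<lambda>w. f w * f w) x0"
    unfolding F_def by (rule lap_lin)
  define g where "g = G x0"
  define p where "p = (f x0)\<^sup>2"
  have key: "0 \<ge> 4 * (n * lam\<^sup>2 * p + K * g) - 4 * lam * g + \<alpha> * lam * (2 * g - 2 * lam * p)"
  proof -
    have "lap V E G x0 = 2 * G2 x0 - 2 * lam * g" using P2[OF x0(1)] by (simp add: g_def)
    then have "0 \<ge> 4 * G2 x0 - 4 * lam * g + \<alpha> * lam * (2 * g - 2 * lam * p)"
      using lapF lapF2 P3[OF x0(1)] by (simp add: g_def p_def algebra_simps)
    moreover have "\<alpha> * lam * (2 * g - 2 * lam * p) = \<alpha> * lam * (2 * g - 2 * lam * p)" ..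
    ultimately show ?thesis using CDz[OF x0(1)] by (simp add: g_def p_def)
  qed
  have "c * F x0 \<le> lam * p * A"
  proof -
    have "c * F x0 = 2 * g * c + \<alpha> * lam * p * c"
      by (simp add: F_def g_def p_def power2_eq_square algebra_simps)
    also have "2 * g * c \<le> (2 * \<alpha> - 4 * n) * lam\<^sup>2 * p"
      using key by (simp add: c_def power2_eq_square algebra_simps)
    finally show ?thesis by (simp add: A_def c_def power2_eq_square algebra_simps)
  qed
  then have Fx0: "F x0 \<le> A / c * lam * p" using cpos
    by (simp add: pos_le_divide_eq mult.commute mult.left_commute)
  have pM: "p \<le> Max ((\<lambda>z. (f z)\<^sup>2) ` V)" unfolding p_def using finV x0(1) by simp
  have coef0: "A / c * lam \<ge> 0" using A0 cpos lampos by simp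
  have "F x \<le> F x0" using x0 assms(7) by simp
  also have "\<dots> \<le> A / c * lam * p" by (rule Fx0)
  also have "\<dots> \<le> A / c * lam * Max ((\<lambda>z. (f z)\<^sup>2) ` V)" using pM coef0 by (rule mult_left_mono)
  finally show ?thesis unfolding Fs A_def c_def n_def .
qed

end
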